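(* Let $M$ be an $n$-quasi-paving matroid of rank $n$. Then $M$ arises from a tame paving matroid by successive principal extensions along flats of rank $n-2$; that is, there exist a tame paving matroid $M_0$ and matroids $M_1,\ldots,M_r=M$ ($r\ge 0$) such that for each $i\in[r]$, $M_i=M_{i-1}+_{F_i}a_i$ for some flat $F_i$ of $M_{i-1}$ of rank $n-2$ and some new element $a_i$.
   Context: Quasi-paving construction: given a positive integer $n\le d$ and a collection $\mathcal{H}=\{H_1,\ldots,H_k\}$ of subsets of $[d]$ any three of which have empty intersection, the $n$-quasi-paving matroid with representation $\mathcal{H}$ is the matroid on $[d]$ whose circuits are: (Type 1) the $(n-1)$-element subsets contained in the intersection of two distinct members of $\mathcal{H}$; (Type 2) the $n$-element subsets of some $H_i$ containing no Type 1 set; (Type 3) the $(n+1)$-element subsets containing no Type 1 or Type 2 set. An $n$-quasi-paving matroid is one arising in this way (its rank need not be $n$). A paving matroid of rank $n$ is one all of whose circuits have size $n$ or $n+1$; a dependent hyperplane is a maximal set of size at least $n$ all of whose $n$-subsets are circuits; a paving matroid is tame if any three distinct dependent hyperplanes have empty intersection. Principal extension: if $M'$ is a matroid on $E'$, $F$ a flat of $M'$ and $a\notin E'$, then $M'+_F a$ is the matroid on $E'\cup\{a\}$ with bases $\mathcal{B}(M')\cup\{(\lambda\setminus\{b\})\cup\{a\}:\lambda\in\mathcal{B}(M'),\ b\in\lambda\cap F\}$. *)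

theory Defs
  imports Main
begin

type_synonym matroid = "nat set \<times> nat set set"

definition ground :: "matroid \<Rightarrow> nat set" where "ground M = fst M"
definition bases :: "matroid \<Rightarrow> nat set set" where "bases M = snd M"

definition is_matroid :: "matroid \<Rightarrow> bool" where
  "is_matroid M \<longleftrightarrow> finite (ground M) \<and> bases M \<noteq> {} \<and>
     (\<forall>X\<in>bases M. X \<subseteq> ground M) \<and>
     (\<forall>B1\<in>bases M. \<forall>B2\<in>bases M. \<forall>x\<in>B1 - B2.
        \<exists>y\<in>B2 - B1. insert y (B1 - {x}) \<in> bases M)"

definition indep :: "matroid \<Rightarrow> nat set \<Rightarrow> bool" where
  "indep M X \<longleftrightarrow> (\<exists>B\<in>bases M. X \<subseteq> B)"

definition circuits :: "matroid \<Rightarrow> nat set set" where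
  "circuits M = {C. C \<subseteq> ground M \<and> \<not> indep M C \<and> (\<forall>D. D \<subset> C \<longrightarrow> indep M D)}"

definition rk :: "matroid \<Rightarrow> nat set \<Rightarrow> nat" where
  "rk M X = Max {card I | I. I \<subseteq> X \<and> indep M I}"

definition matroid_rank :: "matroid \<Rightarrow> nat" where
  "matroid_rank M = rk M (ground M)"

definition flat :: "matroid \<Rightarrow> nat set \<Rightarrow> bool" where
  "flat M F \<longleftrightarrow> F \<subseteq> ground M \<and> (\<forall>e\<in>ground M - F. rk M (insert e F) > rk M F)"

definition principal_ext :: "matroid \<Rightarrow> nat set \<Rightarrow> nat \<Rightarrow> matroid" where
  "principal_ext M F a = (insert a (ground M),
     bases M \<union> {insert a (L - {b}) | L b. L \<in> bases M \<and> b \<in> L \<inter> F})"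

definition qp_type1 :: "nat \<Rightarrow> nat set set \<Rightarrow> nat set set" where
  "qp_type1 n H = {X. card X = n - 1 \<and> (\<exists>H1\<in>H. \<exists>H2\<in>H. H1 \<noteq> H2 \<and> X \<subseteq> H1 \<inter> H2)}"

definition qp_type2 :: "nat \<Rightarrow> nat set set \<Rightarrow> nat set set" where
  "qp_type2 n H = {X. card X = n \<and> (\<exists>Hi\<in>H. X \<subseteq> Hi) \<and> (\<forall>Y\<in>qp_type1 n H. \<not> Y \<subseteq> X)}"

definition qp_type3 :: "nat \<Rightarrow> nat \<Rightarrow> nat set set \<Rightarrow> nat set set" where
  "qp_type3 d n H = {X. X \<subseteq> {1..d} \<and> card X = n + 1 \<and>
      (\<forall>Y\<in>qp_type1 n H \<union> qp_type2 n H. \<not> Y \<subseteq> X)}"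

definition qp_circuits :: "nat \<Rightarrow> nat \<Rightarrow> nat set set \<Rightarrow> nat set set" where
  "qp_circuits d n H = qp_type1 n H \<union> qp_type2 n H \<union> qp_type3 d n H"

definition quasi_paving_rep :: "nat \<Rightarrow> nat \<Rightarrow> nat set set \<Rightarrow> bool" where
  "quasi_paving_rep d n H \<longleftrightarrow> 0 < n \<and> n \<le> d \<and> (\<forall>Hi\<in>H. Hi \<subseteq> {1..d}) \<and>
     (\<forall>H1\<in>H. \<forall>H2\<in>H. \<forall>H3\<in>H. H1 \<noteq> H2 \<and> H1 \<noteq> H3 \<and> H2 \<noteq> H3 \<longrightarrow> H1 \<inter> H2 \<inter> H3 = {})"

definition n_quasi_paving :: "nat \<Rightarrow> matroid \<Rightarrow> bool" where
  "n_quasi_paving n M \<longleftrightarrow> is_matroid M \<and>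
     (\<exists>d H. quasi_paving_rep d n H \<and> ground M = {1..d} \<and> circuits M = qp_circuits d n H)"

definition paving :: "matroid \<Rightarrow> bool" where
  "paving M \<longleftrightarrow> is_matroid M \<and>
     (\<forall>C\<in>circuits M. card C = matroid_rank M \<or> card C = matroid_rank M + 1)"

definition hyp_cand :: "matroid \<Rightarrow> nat set \<Rightarrow> bool" where
  "hyp_cand M X \<longleftrightarrow> X \<subseteq> ground M \<and> card X \<ge> matroid_rank M \<and>
     (\<forall>Y. Y \<subseteq> X \<and> card Y = matroid_rank M \<longrightarrow> Y \<in> circuits M)"

definition dependent_hyperplane :: "matroid \<Rightarrow> nat set \<Rightarrow> bool" where
  "dependent_hyperplane M X \<longleftrightarrow> hyp_cand M X \<and> (\<forall>Y. hyp_cand M Y \<and> X \<subseteq> Y \<longrightarrow> Y = X)"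

definition tame :: "matroid \<Rightarrow> bool" where
  "tame M \<longleftrightarrow> (\<forall>X Y Z. dependent_hyperplane M X \<and> dependent_hyperplane M Y \<and>
      dependent_hyperplane M Z \<and> X \<noteq> Y \<and> X \<noteq> Z \<and> Y \<noteq> Z \<longrightarrow> X \<inter> Y \<inter> Z = {})"

end

theory Submission
  imports Defs
begin


lemma basis_indep: "B \<in> bases M \<Longrightarrow> indep M B"
  unfolding indep_def by blast

lemma indep_subset: "indep M X \<Longrightarrow> Y \<subseteq> X \<Longrightarrow> indep M Y"
  unfolding indep_def by blast

lemma circuit_not_indep: "C \<in> circuits M \<Longrightarrow> \<not> indep M C"
  unfolding circuits_def by blast

lemma indep_no_circuit: "indep M X \<Longrightarrow> C \<in> circuits M \<Longrightarrow> \<not> C \<subseteq> X"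
  using indep_subset circuit_not_indep by blast

lemma indep_ground: "is_matroid M \<Longrightarrow> indep M X \<Longrightarrow> X \<subseteq> ground M"
  unfolding indep_def is_matroid_def by blast

lemma dep_has_circuit:
  assumes "is_matroid M" "Y \<subseteq> ground M" "\<not> indep M Y"
  shows "\<exists>C\<in>circuits M. C \<subseteq> Y"
  using assms(2,3)
proof (induction "card Y" arbitrary: Y rule: less_induct)
  case less
  have fin: "finite Y" using less.prems(1) assms(1) unfolding is_matroid_def
    using finite_subset by blast
  show ?case
  proof (cases "\<forall>D. D \<subset> Y \<longrightarrow> indep M D")
    case True
    then have "Y \<in> circuits M" using less.prems unfolding circuits_def by blast
    then show ?thesis by blast
  next
    case False
    then obtain D where D: "D \<subset> Y" "\<not> indep M D" by blast
    have "card D < card Y" using D fin psubset_card_mono by blast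
    then obtain C where "C \<in> circuits M" "C \<subseteq> D"
      using less.hyps[of D] D less.prems by blast
    then show ?thesis using D by blast
  qed
qed

lemma indep_iff_circ:
  assumes "is_matroid M"
  shows "indep M X \<longleftrightarrow> X \<subseteq> ground M \<and> (\<forall>C\<in>circuits M. \<not> C \<subseteq> X)"
proof
  assume "indep M X" then show "X \<subseteq> ground M \<and> (\<forall>C\<in>circuits M. \<not> C \<subseteq> X)"
    using indep_ground[OF assms] indep_no_circuit by blast
next
  assume a: "X \<subseteq> ground M \<and> (\<forall>C\<in>circuits M. \<not> C \<subseteq> X)"
  show "indep M X"
  proof (rule ccontr)
    assume "\<not> indep M X"
    then have "\<exists>C\<in>circuits M. C \<subseteq> X" using dep_has_circuit[OF assms, of X] a by simp
    then show False using a by simp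
  qed
qed

lemma exch:
  assumes "is_matroid M" "B1 \<in> bases M" "B2 \<in> bases M" "x \<in> B1 - B2"
  shows "\<exists>y\<in>B2 - B1. insert y (B1 - {x}) \<in> bases M"
proof -
  have "\<forall>B1\<in>bases M. \<forall>B2\<in>bases M. \<forall>x\<in>B1 - B2. \<exists>y\<in>B2 - B1. insert y (B1 - {x}) \<in> bases M"
    using assms(1) unfolding is_matroid_def by (elim conjE)
  then show ?thesis using assms(2,3,4) by simp
qed

lemma finB_gen: "is_matroid M \<Longrightarrow> B \<in> bases M \<Longrightarrow> finite B"
proof -
  assume a: "is_matroid M" "B \<in> bases M"
  then have "B \<subseteq> ground M" "finite (ground M)" unfolding is_matroid_def by simp_all
  then show "finite B" by (rule finite_subset)
qed

lemma bases_card_le: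
  assumes "is_matroid M" "B1 \<in> bases M" "B2 \<in> bases M"
  shows "card B1 \<le> card B2"
  using assms(2)
proof (induction "card (B1 - B2)" arbitrary: B1 rule: less_induct)
  case less
  have finB: "finite B" if "B \<in> bases M" for B
    using finB_gen[OF assms(1) that] .
  show ?case
  proof (cases "B1 - B2 = {}")
    case True
    then have "B1 \<subseteq> B2" by simp
    then show ?thesis using finB[OF assms(3)] by (rule card_mono[rotated])
  next
    case False
    then obtain x where x: "x \<in> B1 - B2" by blast
    then obtain y where y: "y \<in> B2 - B1" "insert y (B1 - {x}) \<in> bases M"
      using exch[OF assms(1) less.prems assms(3)] by blast
    let ?B = "insert y (B1 - {x})"
    have fB1: "finite B1" using finB[OF less.prems] .
    have yn: "y \<notin> B1 - {x}" using y by blast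
    have "card ?B = Suc (card (B1 - {x}))" using yn fB1 by simp
    also have "\<dots> = card B1" using card.remove[OF fB1, of x] x by simp
    finally have c1: "card ?B = card B1" .
    have eq: "?B - B2 = (B1 - B2) - {x}" using y by blast
    have "card ((B1 - B2) - {x}) < card (B1 - B2)"
      using x fB1 by (intro card_Diff1_less) auto
    then have "card (?B - B2) < card (B1 - B2)" unfolding eq .
    then have "card ?B \<le> card B2" using less.hyps[OF _ y(2)] by simp
    then show ?thesis using c1 by simp
  qed
qed

lemma bases_card_eq:
  assumes "is_matroid M" "B1 \<in> bases M" "B2 \<in> bases M"
  shows "card B1 = card B2"
  using bases_card_le[OF assms(1,2,3)] bases_card_le[OF assms(1,3,2)] by simp

lemma augment:
  assumes "is_matroid M" "indep M Y" "B0 \<in> bases M"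
  shows "\<exists>B1\<in>bases M. Y \<subseteq> B1 \<and> B1 \<subseteq> Y \<union> B0"
proof -
  have finB: "finite B" if "B \<in> bases M" for B
    using finB_gen[OF assms(1) that] .
  have "\<And>B1. B1 \<in> bases M \<Longrightarrow> Y \<subseteq> B1 \<Longrightarrow> \<exists>B2\<in>bases M. Y \<subseteq> B2 \<and> B2 \<subseteq> Y \<union> B0"
  proof -
    fix B1 assume "B1 \<in> bases M" "Y \<subseteq> B1"
    then show "\<exists>B2\<in>bases M. Y \<subseteq> B2 \<and> B2 \<subseteq> Y \<union> B0"
    proof (induction "card (B1 - (Y \<union> B0))" arbitrary: B1 rule: less_induct)
      case less
      show ?case
      proof (cases "B1 - (Y \<union> B0) = {}")
        case True
        then show ?thesis using less.prems by blast
      next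
        case False
        then obtain x where x: "x \<in> B1 - (Y \<union> B0)" by blast
        then have "x \<in> B1 - B0" by blast
        then obtain y where y: "y \<in> B0 - B1" "insert y (B1 - {x}) \<in> bases M"
          using exch[OF assms(1) less.prems(1) assms(3)] by blast
        let ?B = "insert y (B1 - {x})"
        have eq: "?B - (Y \<union> B0) = (B1 - (Y \<union> B0)) - {x}" using y by blast
        have "card ((B1 - (Y \<union> B0)) - {x}) < card (B1 - (Y \<union> B0))"
          using x finB[OF less.prems(1)] by (intro card_Diff1_less) auto
        then have "card (?B - (Y \<union> B0)) < card (B1 - (Y \<union> B0))" unfolding eq .
        moreover have "Y \<subseteq> ?B" using x less.prems by blast
        ultimately show ?thesis using less.hyps y(2) by blast
      qed
    qed
  qed
  then show ?thesis using assms(2) unfolding indep_def by blast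
qed

lemma rk_ge:
  assumes "finite X" "I \<subseteq> X" "indep M I"
  shows "card I \<le> rk M X"
proof -
  have "{card I |I. I \<subseteq> X \<and> indep M I} \<subseteq> card ` Pow X" by blast
  then have "finite {card I |I. I \<subseteq> X \<and> indep M I}"
    using assms(1) finite_subset by blast
  then show ?thesis unfolding rk_def using assms by (intro Max_ge) blast+
qed

lemma rk_le:
  assumes "finite X" "indep M {}" "\<And>I. I \<subseteq> X \<Longrightarrow> indep M I \<Longrightarrow> card I \<le> k"
  shows "rk M X \<le> k"
proof -
  have "{card I |I. I \<subseteq> X \<and> indep M I} \<subseteq> card ` Pow X" by blast
  then have "finite {card I |I. I \<subseteq> X \<and> indep M I}"
    using assms(1) finite_subset by blast
  moreover have "{card I |I. I \<subseteq> X \<and> indep M I} \<noteq> {}" using assms(2) by blast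
  ultimately show ?thesis unfolding rk_def using assms(3) by (subst Max_le_iff) auto
qed



definition restr :: "matroid \<Rightarrow> nat set \<Rightarrow> matroid" where
  "restr M E' = (E', {X. X \<subseteq> E' \<and> X \<in> bases M})"

lemma ground_restr[simp]: "ground (restr M E') = E'"
  unfolding restr_def ground_def by simp
lemma bases_restr[simp]: "bases (restr M E') = {X. X \<subseteq> E' \<and> X \<in> bases M}"
  unfolding restr_def bases_def by simp

locale qp =
  fixes M :: matroid and d n :: nat and H :: "nat set set"
  assumes mat: "is_matroid M" and rep: "quasi_paving_rep d n H"
    and gr: "ground M = {1..d}" and circ: "circuits M = qp_circuits d n H"
    and rank: "matroid_rank M = n"
begin

abbreviation "E \<equiv> {1..d}"

lemma finE: "finite E" by simp

lemma npos: "0 < n" using rep unfolding quasi_paving_rep_def by simp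

lemma HsubE: "Hi \<in> H \<Longrightarrow> Hi \<subseteq> E" using rep unfolding quasi_paving_rep_def by blast

lemma triple: "H1 \<in> H \<Longrightarrow> H2 \<in> H \<Longrightarrow> H3 \<in> H \<Longrightarrow> H1 \<noteq> H2 \<Longrightarrow> H1 \<noteq> H3 \<Longrightarrow> H2 \<noteq> H3
   \<Longrightarrow> H1 \<inter> H2 \<inter> H3 = {}"
  using rep unfolding quasi_paving_rep_def by blast

lemma in_pair: assumes "H1 \<in> H" "H2 \<in> H" "H1 \<noteq> H2" "z \<in> H1 \<inter> H2" "Hk \<in> H" "z \<in> Hk"
  shows "Hk = H1 \<or> Hk = H2"
proof (rule ccontr)
  assume "\<not> (Hk = H1 \<or> Hk = H2)"
  then have "H1 \<inter> H2 \<inter> Hk = {}" using triple[OF assms(1,2,5) assms(3)] by auto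
  then show False using assms(4,6) by blast
qed

lemma pair_eq: "H1 \<in> H \<Longrightarrow> H2 \<in> H \<Longrightarrow> H1 \<noteq> H2 \<Longrightarrow> H3 \<in> H \<Longrightarrow> H4 \<in> H \<Longrightarrow> H3 \<noteq> H4
   \<Longrightarrow> z \<in> H1 \<inter> H2 \<Longrightarrow> z \<in> H3 \<inter> H4 \<Longrightarrow> H3 \<inter> H4 = H1 \<inter> H2"
proof -
  assume a: "H1 \<in> H" "H2 \<in> H" "H1 \<noteq> H2" "H3 \<in> H" "H4 \<in> H" "H3 \<noteq> H4"
     "z \<in> H1 \<inter> H2" "z \<in> H3 \<inter> H4"
  have "H3 = H1 \<or> H3 = H2" using in_pair[OF a(1,2,3,7) a(4)] a(8) by simp
  moreover have "H4 = H1 \<or> H4 = H2" using in_pair[OF a(1,2,3,7) a(5)] a(8) by simp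
  ultimately show ?thesis using a(6) by auto
qed

lemma t1_in_S:
  assumes "Z \<in> qp_type1 n H" "z \<in> Z" "H1 \<in> H" "H2 \<in> H" "H1 \<noteq> H2" "z \<in> H1 \<inter> H2"
  shows "Z \<subseteq> H1 \<inter> H2"
proof -
  obtain H3 H4 where "H3 \<in> H" "H4 \<in> H" "H3 \<noteq> H4" "Z \<subseteq> H3 \<inter> H4"
    using assms(1) unfolding qp_type1_def by blast
  then show ?thesis using pair_eq[OF assms(3,4,5), of H3 H4 z] assms by blast
qed

lemma t1_mk: "H1 \<in> H \<Longrightarrow> H2 \<in> H \<Longrightarrow> H1 \<noteq> H2 \<Longrightarrow> Y \<subseteq> H1 \<inter> H2 \<Longrightarrow> card Y = n - 1
   \<Longrightarrow> Y \<in> qp_type1 n H"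
  unfolding qp_type1_def by blast

lemma circ_t1: "Y \<in> qp_type1 n H \<Longrightarrow> Y \<in> circuits M"
  unfolding circ qp_circuits_def by blast
lemma circ_t2: "Y \<in> qp_type2 n H \<Longrightarrow> Y \<in> circuits M"
  unfolding circ qp_circuits_def by blast

lemma circ_cases: "C \<in> circuits M \<Longrightarrow> C \<in> qp_type1 n H \<or> C \<in> qp_type2 n H \<or> C \<in> qp_type3 d n H"
  unfolding circ qp_circuits_def by blast

lemma card_t1: "C \<in> qp_type1 n H \<Longrightarrow> card C = n - 1" unfolding qp_type1_def by blast
lemma card_t2: "C \<in> qp_type2 n H \<Longrightarrow> card C = n" unfolding qp_type2_def by blast
lemma card_t3: "C \<in> qp_type3 d n H \<Longrightarrow> card C = n + 1" unfolding qp_type3_def by blast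

lemma indep_iff: "indep M X \<longleftrightarrow> X \<subseteq> E \<and> (\<forall>C\<in>circuits M. \<not> C \<subseteq> X)"
  using indep_iff_circ[OF mat] gr by simp

lemma indep_sub: "indep M X \<Longrightarrow> X \<subseteq> E" using indep_iff by blast

lemma finB: "B \<in> bases M \<Longrightarrow> finite B"
  using mat gr unfolding is_matroid_def by (metis finE finite_subset)

lemma bases_ne: "bases M \<noteq> {}" using mat unfolding is_matroid_def by blast

lemma indep_empty: "indep M {}" using bases_ne unfolding indep_def by blast

lemma bases_card: assumes "B \<in> bases M" shows "card B = n"
proof -
  have "rk M E \<le> card B"
  proof (rule rk_le[OF finE indep_empty])
    fix I assume "I \<subseteq> E" "indep M I"
    then obtain B' where "B' \<in> bases M" "I \<subseteq> B'" unfolding indep_def by blast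
    then show "card I \<le> card B" using bases_card_eq[OF mat _ assms] finB card_mono by metis
  qed
  moreover have "card B \<le> rk M E"
    using rk_ge[OF finE _ basis_indep[OF assms]] indep_sub basis_indep assms by blast
  ultimately show ?thesis using rank gr unfolding matroid_rank_def by simp
qed

lemma indep_card: "indep M X \<Longrightarrow> card X \<le> n"
  unfolding indep_def using bases_card finB card_mono by metis

lemma bases_char: "X \<in> bases M \<longleftrightarrow> X \<subseteq> E \<and> card X = n \<and> indep M X"
proof
  assume "X \<in> bases M" then show "X \<subseteq> E \<and> card X = n \<and> indep M X"
    using bases_card basis_indep indep_sub by blast
next
  assume a: "X \<subseteq> E \<and> card X = n \<and> indep M X"
  then obtain B where "B \<in> bases M" "X \<subseteq> B" unfolding indep_def by blast
  then show "X \<in> bases M" using a bases_card finB card_subset_eq by metis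
qed

lemma finite_indep: "indep M X \<Longrightarrow> finite X" using indep_sub finite_subset finE by blast

lemma indep_restr:
  assumes "B0 \<in> bases M" "B0 \<subseteq> E'"
  shows "indep (restr M E') Y \<longleftrightarrow> Y \<subseteq> E' \<and> indep M Y"
proof
  assume "indep (restr M E') Y" then show "Y \<subseteq> E' \<and> indep M Y"
    unfolding indep_def by auto
next
  assume a: "Y \<subseteq> E' \<and> indep M Y"
  then obtain B1 where "B1 \<in> bases M" "Y \<subseteq> B1" "B1 \<subseteq> Y \<union> B0" using augment[OF mat _ assms(1)] by blast
  moreover have "B1 \<subseteq> E'" using calculation(3) a assms(2) by blast
  ultimately show "indep (restr M E') Y" unfolding indep_def by auto
qed

lemma circuits_restr:
  assumes "B0 \<in> bases M" "B0 \<subseteq> E'" "E' \<subseteq> E"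
  shows "circuits (restr M E') = {C \<in> circuits M. C \<subseteq> E'}"
proof (intro set_eqI iffI)
  fix C assume "C \<in> circuits (restr M E')"
  then have c: "C \<subseteq> E'" "\<not> indep (restr M E') C" "\<forall>D. D \<subset> C \<longrightarrow> indep (restr M E') D"
    unfolding circuits_def by simp_all
  then have "\<not> indep M C" "\<forall>D. D \<subset> C \<longrightarrow> indep M D" "C \<subseteq> ground M"
    using indep_restr[OF assms(1,2)] assms(3) gr by auto
  then show "C \<in> {C \<in> circuits M. C \<subseteq> E'}" using c(1) unfolding circuits_def by simp
next
  fix C assume "C \<in> {C \<in> circuits M. C \<subseteq> E'}"
  then have c: "C \<subseteq> E'" "\<not> indep M C" "\<forall>D. D \<subset> C \<longrightarrow> indep M D"
    unfolding circuits_def by simp_all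
  then have "\<not> indep (restr M E') C" "\<forall>D. D \<subset> C \<longrightarrow> indep (restr M E') D"
    using indep_restr[OF assms(1,2)] by auto
  then show "C \<in> circuits (restr M E')" using c(1) unfolding circuits_def by simp
qed

lemma indep_empty_restr: "B0 \<in> bases M \<Longrightarrow> B0 \<subseteq> E' \<Longrightarrow> indep (restr M E') {}"
  using indep_restr indep_empty by blast

lemma rank_restr:
  assumes "B0 \<in> bases M" "B0 \<subseteq> E'" "E' \<subseteq> E"
  shows "matroid_rank (restr M E') = n"
proof -
  have fin: "finite E'" using assms(3) finite_subset by blast
  have "rk (restr M E') E' \<le> n"
    using rk_le[OF fin indep_empty_restr[OF assms(1,2)]] indep_restr[OF assms(1,2)] indep_card by blast
  moreover have "n \<le> rk (restr M E') E'"
    using rk_ge[OF fin assms(2)] indep_restr[OF assms(1,2)] assms basis_indep bases_card by metis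
  ultimately show ?thesis unfolding matroid_rank_def by simp
qed

end


context qp begin

lemma indepI: "X \<subseteq> E \<Longrightarrow> (\<And>C. C \<in> circuits M \<Longrightarrow> C \<subseteq> X \<Longrightarrow> False) \<Longrightarrow> indep M X"
  using indep_iff by blast

lemma t2_iff: "Y \<in> qp_type2 n H \<longleftrightarrow> card Y = n \<and> (\<exists>Hi\<in>H. Y \<subseteq> Hi) \<and> (\<forall>Z\<in>qp_type1 n H. \<not> Z \<subseteq> Y)"
  unfolding qp_type2_def by simp

lemma circ_sub: "C \<in> circuits M \<Longrightarrow> C \<subseteq> E"
  using gr unfolding circuits_def by simp

lemma circ_fin: "C \<in> circuits M \<Longrightarrow> finite C"
  using circ_sub finite_subset finE by blast

lemma step3:
  assumes B0: "B0 \<in> bases M" "B0 \<subseteq> E'" and E': "E' \<subseteq> E" and a: "a \<in> E" "a \<notin> E'"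
    and T: "T \<in> qp_type1 n H" "a \<in> T" "T - {a} \<subseteq> E'" and n3: "3 \<le> n"
  shows "\<exists>F. flat (restr M E') F \<and> int (rk (restr M E') F) = int n - 2 \<and>
           restr M (insert a E') = principal_ext (restr M E') F a"
proof -
  obtain H1 H2 where HH: "H1 \<in> H" "H2 \<in> H" "H1 \<noteq> H2" "T \<subseteq> H1 \<inter> H2"
    using T(1) unfolding qp_type1_def by blast
  define S where "S = H1 \<inter> H2"
  define K where "K = T - {a}"
  have SE: "S \<subseteq> E" using HsubE[OF HH(1)] S_def by blast
  have finS: "finite S" using SE finite_subset by blast
  have TS: "T \<subseteq> S" using HH S_def by simp
  have finT: "finite T" using TS finS finite_subset by blast
  have cT: "card T = n - 1" using card_t1[OF T(1)] .
  have cK: "card K = n - 2" unfolding K_def using cT T(2) finT by simp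
  have KS: "K \<subseteq> S" using TS K_def by blast
  have aS: "a \<in> S" using TS T(2) by blast
  have KE': "K \<subseteq> E'" using T(3) K_def by simp
  have aK: "a \<notin> K" using K_def by simp
  have finK: "finite K" using finT K_def by simp
  have t1S: "Y \<in> circuits M" if "Y \<subseteq> S" "card Y = n - 1" for Y
    using circ_t1[OF t1_mk[OF HH(1,2,3)]] that S_def by simp
  have t1in: "Z \<subseteq> S" if "Z \<in> qp_type1 n H" "z \<in> Z" "z \<in> S" for Z z
    using t1_in_S[OF that(1,2) HH(1,2,3)] that(3) S_def by simp
  have HkS: "S \<subseteq> Hk" if "Hk \<in> H" "z \<in> Hk" "z \<in> S" for Hk z
    using in_pair[OF HH(1,2,3) _ that(1,2)] that(3) S_def by auto
  have smallS: "card Y \<le> n - 2" if "indep M Y" "Y \<subseteq> S" for Y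
  proof (rule ccontr)
    assume "\<not> card Y \<le> n - 2"
    then have "n - 1 \<le> card Y" by simp
    then obtain W where W: "W \<subseteq> Y" "card W = n - 1" by (meson obtain_subset_with_card_n)
    have "W \<in> circuits M" using t1S W that(2) by blast
    then show False using indep_no_circuit[OF that(1)] W(1) by blast
  qed
  have indR: "indep (restr M E') Y \<longleftrightarrow> Y \<subseteq> E' \<and> indep M Y" for Y
    using indep_restr[OF B0] .
  have finE': "finite E'" using E' finite_subset by blast
  have Tc: "T \<in> circuits M" using circ_t1[OF T(1)] .
  have indK: "indep M K"
  proof -
    have "K \<subset> T" using K_def T(2) by blast
    then show ?thesis using Tc unfolding circuits_def by blast
  qed
  define F where "F = E' \<inter> S"
  have finF: "finite F" using F_def finE' by simp
  have rkF: "rk (restr M E') F = n - 2"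
  proof (rule antisym)
    show "rk (restr M E') F \<le> n - 2"
    proof (rule rk_le[OF finF indep_empty_restr[OF B0]])
      fix I assume "I \<subseteq> F" "indep (restr M E') I"
      then show "card I \<le> n - 2" using smallS indR F_def by simp
    qed
    show "n - 2 \<le> rk (restr M E') F"
      using rk_ge[OF finF, of K "restr M E'"] indR indK KE' KS F_def cK by simp
  qed
  have flatF: "flat (restr M E') F"
    unfolding flat_def
  proof (intro conjI ballI)
    show "F \<subseteq> ground (restr M E')" using F_def by simp
    fix e assume e: "e \<in> ground (restr M E') - F"
    then have eE': "e \<in> E'" and eS: "e \<notin> S" using F_def by auto
    have eK: "e \<notin> K" using eS KS by blast
    have ceK: "card (insert e K) = n - 1" using eK finK cK n3 by simp
    have ind: "indep M (insert e K)"
    proof (rule indepI)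
      show "insert e K \<subseteq> E" using eE' KE' E' by blast
      fix C assume C: "C \<in> circuits M" "C \<subseteq> insert e K"
      have cC: "card C \<le> n - 1"
        using card_mono[of "insert e K" C] finK C(2) ceK by simp
      have n2: "C \<notin> qp_type2 n H"
      proof
        assume "C \<in> qp_type2 n H" then have "card C = n" by (rule card_t2)
        then show False using cC npos by simp
      qed
      have n3': "C \<notin> qp_type3 d n H"
      proof
        assume "C \<in> qp_type3 d n H" then have "card C = n + 1" by (rule card_t3)
        then show False using cC by simp
      qed
      have t1C: "C \<in> qp_type1 n H" using circ_cases[OF C(1)] n2 n3' by blast
      then have cC1: "card C = n - 1" by (rule card_t1)
      have Ceq: "C = insert e K" using card_subset_eq[of "insert e K" C] finK C(2) cC1 ceK by simp
      have "K \<noteq> {}" using cK n3 by auto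
      then obtain k where k: "k \<in> K" by blast
      have "C \<subseteq> S" using t1in[OF t1C, of k] k Ceq KS by blast
      then show False using Ceq eS by blast
    qed
    have "n - 1 \<le> rk (restr M E') (insert e F)"
      using rk_ge[of "insert e F" "insert e K" "restr M E'"] finF indR ind eE' KE' KS F_def ceK by auto
    then show "rk (restr M E') F < rk (restr M E') (insert e F)" using rkF n3 by simp
  qed
  have bases_eq: "{X. X \<subseteq> insert a E' \<and> X \<in> bases M} =
     {X. X \<subseteq> E' \<and> X \<in> bases M} \<union> {insert a (L - {b}) |L b. L \<in> {X. X \<subseteq> E' \<and> X \<in> bases M} \<and> b \<in> L \<inter> F}"
  proof (intro set_eqI iffI)
    fix X assume "X \<in> {X. X \<subseteq> insert a E' \<and> X \<in> bases M}"
    then have X: "X \<subseteq> insert a E'" "X \<in> bases M" by simp_all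
    have indX: "indep M X" using basis_indep[OF X(2)] .
    have cX: "card X = n" using bases_card[OF X(2)] .
    have finX: "finite X" using finB[OF X(2)] .
    show "X \<in> {X. X \<subseteq> E' \<and> X \<in> bases M} \<union> {insert a (L - {b}) |L b. L \<in> {X. X \<subseteq> E' \<and> X \<in> bases M} \<and> b \<in> L \<inter> F}"
    proof (cases "a \<in> X")
      case False
      then have "X \<subseteq> E'" using X(1) by blast
      then show ?thesis using X(2) by (intro UnI1) simp
    next
      case True
      define Xa where "Xa = X - {a}"
      have finXa: "finite Xa" using finX Xa_def by simp
      have cXa: "card Xa = n - 1" using cX True finX Xa_def by simp
      have XaE': "Xa \<subseteq> E'" using X(1) Xa_def by blast
      have Xeq: "X = insert a Xa" using True Xa_def by blast
      have aXa: "a \<notin> Xa" using Xa_def by simp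
      have sub1: "insert a (Xa \<inter> S) \<subseteq> X" using Xeq by blast
      have ind1: "indep M (insert a (Xa \<inter> S))" using indep_subset[OF indX sub1] .
      have sub2: "insert a (Xa \<inter> S) \<subseteq> S" using aS by blast
      have c1: "card (insert a (Xa \<inter> S)) \<le> n - 2" using smallS[OF ind1 sub2] .
      have c2: "card (insert a (Xa \<inter> S)) = Suc (card (Xa \<inter> S))"
        using aXa finXa by simp
      have i: "card (Xa \<inter> S) \<le> n - 3" using c1 c2 by linarith
      have "\<not> K \<subseteq> Xa"
      proof
        assume "K \<subseteq> Xa"
        then have "K \<subseteq> Xa \<inter> S" using KS by blast
        then have "card K \<le> card (Xa \<inter> S)" using card_mono[of "Xa \<inter> S" K] finXa by simp
        then show False using i cK n3 by linarith
      qed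
      then obtain b where b: "b \<in> K" "b \<notin> Xa" by blast
      define L where "L = insert b Xa"
      have bS: "b \<in> S" using b KS by blast
      have LE': "L \<subseteq> E'" using L_def b KE' XaE' by blast
      have cL: "card L = n" using L_def b(2) finXa cXa n3 by simp
      have finL: "finite L" using L_def finXa by simp
      have indL: "indep M L"
      proof (rule indepI)
        show "L \<subseteq> E" using LE' E' by blast
        fix C assume C: "C \<in> circuits M" "C \<subseteq> L"
        have finC: "finite C" using circ_fin[OF C(1)] .
        have bC: "b \<in> C"
        proof (rule ccontr)
          assume "b \<notin> C"
          then have "C \<subseteq> X" using C(2) L_def Xeq by blast
          then show False using indep_no_circuit[OF indX C(1)] by blast
        qed
        have n1: "C \<notin> qp_type1 n H"
        proof
          assume t1: "C \<in> qp_type1 n H"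
          then have "C \<subseteq> S" using t1in bC bS by blast
          then have "C - {b} \<subseteq> Xa \<inter> S" using C(2) L_def by blast
          then have "card (C - {b}) \<le> card (Xa \<inter> S)" using card_mono[of "Xa \<inter> S" "C - {b}"] finXa by simp
          moreover have "card (C - {b}) = n - 2" using card_t1[OF t1] bC finC by simp
          ultimately show False using i n3 by simp
        qed
        have n2: "C \<notin> qp_type2 n H"
        proof
          assume t2: "C \<in> qp_type2 n H"
          then have cC: "card C = n" and noT1: "\<forall>Z\<in>qp_type1 n H. \<not> Z \<subseteq> C"
            using t2_iff by simp_all
          obtain Hk where Hk: "Hk \<in> H" "C \<subseteq> Hk" using t2 t2_iff by blast
          have CL: "C = L" using card_subset_eq[OF finL C(2)] cC cL by simp
          have "S \<subseteq> Hk" using HkS[OF Hk(1), of b] Hk(2) bC bS by blast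
          then have XHk: "X \<subseteq> Hk" using Xeq aS CL L_def Hk(2) by blast
          have "X \<notin> qp_type2 n H" using circ_t2 indep_no_circuit[OF indX] by blast
          have "\<exists>Y\<in>qp_type1 n H. Y \<subseteq> X"
          proof (rule ccontr)
            assume "\<not> (\<exists>Y\<in>qp_type1 n H. Y \<subseteq> X)"
            then have "X \<in> qp_type2 n H" unfolding t2_iff using cX XHk Hk(1) by blast
            then show False using \<open>X \<notin> qp_type2 n H\<close> by simp
          qed
          then obtain Y where Y: "Y \<in> qp_type1 n H" "Y \<subseteq> X" by blast
          have aY: "a \<in> Y"
          proof (rule ccontr)
            assume "a \<notin> Y" then have "Y \<subseteq> C" using Y(2) Xeq CL L_def by blast
            then show False using noT1 Y(1) by blast
          qed
          have "Y \<subseteq> S" using t1in[OF Y(1) aY aS] .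
          then have "Y - {a} \<subseteq> Xa \<inter> S" using Y(2) Xa_def by blast
          then have "card (Y - {a}) \<le> card (Xa \<inter> S)" using card_mono[of "Xa \<inter> S" "Y - {a}"] finXa by simp
          moreover have "card (Y - {a}) = n - 2"
            using card_t1[OF Y(1)] aY finite_subset[OF Y(2) finX] by simp
          ultimately show False using i n3 by simp
        qed
        have n3': "C \<notin> qp_type3 d n H"
        proof
          assume "C \<in> qp_type3 d n H" then have "card C = n + 1" by (rule card_t3)
          moreover have "card C \<le> card L" using card_mono[OF finL C(2)] .
          ultimately show False using cL by simp
        qed
        show False using circ_cases[OF C(1)] n1 n2 n3' by blast
      qed
      have Lb: "L \<in> bases M" using bases_char LE' E' cL indL by blast
      have "X = insert a (L - {b})" using Xeq L_def b(2) by auto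
      moreover have "b \<in> L \<inter> F" using L_def b KE' bS F_def by blast
      ultimately show ?thesis using Lb LE' by (intro UnI2 CollectI exI[of _ L] exI[of _ b]) simp
    qed
  next
    fix X assume "X \<in> {X. X \<subseteq> E' \<and> X \<in> bases M} \<union> {insert a (L - {b}) |L b. L \<in> {X. X \<subseteq> E' \<and> X \<in> bases M} \<and> b \<in> L \<inter> F}"
    then consider "X \<subseteq> E'" "X \<in> bases M" | L b where "X = insert a (L - {b})" "L \<subseteq> E'" "L \<in> bases M" "b \<in> L" "b \<in> F"
      by blast
    then show "X \<in> {X. X \<subseteq> insert a E' \<and> X \<in> bases M}"
    proof cases
      case 1 then show ?thesis by blast
    next
      case 2
      have bS: "b \<in> S" using 2 F_def by blast
      have indL: "indep M L" using basis_indep 2 by blast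
      have finL: "finite L" using finB 2 by blast
      have cL: "card L = n" using bases_card 2 by blast
      have aL: "a \<notin> L" using 2 a by blast
      have cX: "card X = n" using 2 aL finL cL n3 by simp
      have finX: "finite X" using 2 finL by simp
      have XE: "X \<subseteq> E" using 2 a E' by blast
      have indX: "indep M X"
      proof (rule indepI[OF XE])
        fix C assume C: "C \<in> circuits M" "C \<subseteq> X"
        have finC: "finite C" using circ_fin[OF C(1)] .
        have aC: "a \<in> C"
        proof (rule ccontr)
          assume "a \<notin> C"
          then have "C \<subseteq> L" using C(2) 2 by blast
          then show False using indep_no_circuit[OF indL C(1)] by blast
        qed
        have n1: "C \<notin> qp_type1 n H"
        proof
          assume t1: "C \<in> qp_type1 n H"
          then have CS: "C \<subseteq> S" using t1in aC aS by blast
          define W where "W = insert b (C - {a})"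
          have WL: "W \<subseteq> L" using W_def C(2) 2 by blast
          have WS: "W \<subseteq> S" using W_def CS bS by blast
          have bCa: "b \<notin> C - {a}" using C(2) 2 by blast
          have "card W = n - 1" using W_def bCa card_t1[OF t1] aC finC n3 by simp
          then have "W \<in> circuits M" using t1S WS by blast
          then show False using indep_no_circuit[OF indL] WL by blast
        qed
        have n2: "C \<notin> qp_type2 n H"
        proof
          assume t2: "C \<in> qp_type2 n H"
          then have cC: "card C = n" and noT1: "\<forall>Z\<in>qp_type1 n H. \<not> Z \<subseteq> C"
            using t2_iff by simp_all
          obtain Hk where Hk: "Hk \<in> H" "C \<subseteq> Hk" using t2 t2_iff by blast
          have CX: "C = X" using card_subset_eq[OF finX C(2)] cC cX by simp
          have "S \<subseteq> Hk" using HkS[OF Hk(1), of a] Hk(2) aC aS by blast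
          then have LHk: "L \<subseteq> Hk" using 2 bS CX Hk(2) by blast
          have "L \<notin> qp_type2 n H" using circ_t2 indep_no_circuit[OF indL] by blast
          then obtain Y where Y: "Y \<in> qp_type1 n H" "Y \<subseteq> L" using t2_iff cL LHk Hk(1) by blast
          have bY: "b \<in> Y"
          proof (rule ccontr)
            assume "b \<notin> Y" then have "Y \<subseteq> C" using Y(2) CX 2 by blast
            then show False using noT1 Y(1) by blast
          qed
          have YS: "Y \<subseteq> S" using t1in[OF Y(1) bY bS] .
          define Y' where "Y' = insert a (Y - {b})"
          have aY: "a \<notin> Y" using Y(2) aL by blast
          have finY: "finite Y" using finite_subset[OF Y(2) finL] .
          have "card Y' = n - 1" using Y'_def aY card_t1[OF Y(1)] bY finY n3 by simp
          moreover have "Y' \<subseteq> H1 \<inter> H2" using Y'_def YS aS S_def by blast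
          ultimately have "Y' \<in> qp_type1 n H" using t1_mk[OF HH(1,2,3)] by blast
          moreover have "Y' \<subseteq> C" using Y'_def CX 2 Y(2) by blast
          ultimately show False using noT1 by blast
        qed
        have n3': "C \<notin> qp_type3 d n H"
        proof
          assume "C \<in> qp_type3 d n H" then have "card C = n + 1" by (rule card_t3)
          moreover have "card C \<le> card X" using card_mono[OF finX C(2)] .
          ultimately show False using cX by simp
        qed
        show False using circ_cases[OF C(1)] n1 n2 n3' by blast
      qed
      have "X \<in> bases M" using bases_char XE cX indX by blast
      moreover have "X \<subseteq> insert a E'" using 2 by blast
      ultimately show ?thesis by blast
    qed
  qed
  have "restr M (insert a E') = principal_ext (restr M E') F a"
    unfolding principal_ext_def ground_restr bases_restr using bases_eq by (simp add: restr_def)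
  then show ?thesis using flatF rkF n3 by (intro exI[of _ F]) auto
qed

end


context qp begin

lemma step2:
  assumes B0: "B0 \<in> bases M" "B0 \<subseteq> E'" and E': "E' \<subseteq> E" and a: "a \<in> E" "a \<notin> E'"
    and T: "T \<in> qp_type1 n H" "a \<in> T" and n2: "n = 2"
  shows "\<exists>F. flat (restr M E') F \<and> int (rk (restr M E') F) = int n - 2 \<and>
           restr M (insert a E') = principal_ext (restr M E') F a"
proof -
  have cT: "card T = 1" using card_t1[OF T(1)] n2 by simp
  have Ta: "T = {a}" using cT T(2) by (metis card_1_singletonE singletonD)
  have ac: "{a} \<in> circuits M" using circ_t1[OF T(1)] Ta by simp
  have indR: "indep (restr M E') Y \<longleftrightarrow> Y \<subseteq> E' \<and> indep M Y" for Y
    using indep_restr[OF B0] .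
  have finE': "finite E'" using E' finite_subset by blast
  define F where "F = {x \<in> E'. \<not> indep M {x}}"
  have finF: "finite F" using F_def finE' by simp
  have rkF: "rk (restr M E') F = 0"
  proof -
    have "rk (restr M E') F \<le> 0"
    proof (rule rk_le[OF finF indep_empty_restr[OF B0]])
      fix I assume I: "I \<subseteq> F" "indep (restr M E') I"
      have "I = {}"
      proof (rule ccontr)
        assume "I \<noteq> {}" then obtain y where y: "y \<in> I" by blast
        then have "indep M {y}" using I(2) indR indep_subset by (metis empty_subsetI insert_subset)
        then show False using I(1) y F_def by blast
      qed
      then show "card I \<le> 0" by simp
    qed
    then show ?thesis by simp
  qed
  have flatF: "flat (restr M E') F"
    unfolding flat_def
  proof (intro conjI ballI)
    show "F \<subseteq> ground (restr M E')" using F_def by auto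
    fix e assume e: "e \<in> ground (restr M E') - F"
    then have eE': "e \<in> E'" and ind: "indep M {e}" using F_def by auto
    have "1 \<le> rk (restr M E') (insert e F)"
      using rk_ge[of "insert e F" "{e}" "restr M E'"] finF indR ind eE' by auto
    then show "rk (restr M E') F < rk (restr M E') (insert e F)" using rkF by simp
  qed
  have bases_eq: "{X. X \<subseteq> insert a E' \<and> X \<in> bases M} =
     {X. X \<subseteq> E' \<and> X \<in> bases M} \<union> {insert a (L - {b}) |L b. L \<in> {X. X \<subseteq> E' \<and> X \<in> bases M} \<and> b \<in> L \<inter> F}"
  proof -
    have e2: "{insert a (L - {b}) |L b. L \<in> {X. X \<subseteq> E' \<and> X \<in> bases M} \<and> b \<in> L \<inter> F} = {}"
    proof -
      have "b \<notin> F" if "L \<in> bases M" "b \<in> L" for L b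
      proof -
        have "indep M {b}" using basis_indep[OF that(1)] indep_subset that(2) by blast
        then show ?thesis using F_def by blast
      qed
      then show ?thesis by blast
    qed
    have "a \<notin> X" if "X \<in> bases M" for X
      using indep_no_circuit[OF basis_indep[OF that] ac] by blast
    then have "{X. X \<subseteq> insert a E' \<and> X \<in> bases M} = {X. X \<subseteq> E' \<and> X \<in> bases M}" by blast
    then show ?thesis unfolding e2 by simp
  qed
  have "restr M (insert a E') = principal_ext (restr M E') F a"
    unfolding principal_ext_def ground_restr bases_restr using bases_eq by (simp add: restr_def)
  then show ?thesis using flatF rkF n2 by (intro exI[of _ F]) auto
qed

end


context qp begin

lemma m0:
  assumes B0: "B0 \<in> bases M" "B0 \<subseteq> E0" and E0: "E0 \<subseteq> E"
    and noT1: "\<forall>T\<in>qp_type1 n H. \<not> T \<subseteq> E0"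
  shows "paving (restr M E0) \<and> tame (restr M E0)"
proof -
  let ?M = "restr M E0"
  have rk0: "matroid_rank ?M = n" using rank_restr[OF B0 E0] .
  have circ0: "circuits ?M = {C \<in> circuits M. C \<subseteq> E0}" using circuits_restr[OF B0 E0] .
  have finE0: "finite E0" using E0 finite_subset by blast
  have ism: "is_matroid ?M"
    unfolding is_matroid_def
  proof (intro conjI ballI)
    show "finite (ground ?M)" using finE0 by simp
    show "bases ?M \<noteq> {}" using B0 by auto
    fix X assume "X \<in> bases ?M" then show "X \<subseteq> ground ?M" by simp
  next
    fix B1 B2 x assume b: "B1 \<in> bases ?M" "B2 \<in> bases ?M" "x \<in> B1 - B2"
    then obtain y where y: "y \<in> B2 - B1" "insert y (B1 - {x}) \<in> bases M"
      using exch[OF mat, of B1 B2 x] by auto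
    moreover have "insert y (B1 - {x}) \<subseteq> E0" using b y by auto
    ultimately show "\<exists>y\<in>B2 - B1. insert y (B1 - {x}) \<in> bases ?M" by auto
  qed
  have circ0_t2: "C \<in> qp_type2 n H \<or> C \<in> qp_type3 d n H" if "C \<in> circuits ?M" for C
  proof -
    have "C \<in> circuits M" "C \<subseteq> E0" using that circ0 by auto
    moreover have "C \<notin> qp_type1 n H" using noT1 calculation(2) by blast
    ultimately show ?thesis using circ_cases by blast
  qed
  have pav: "paving ?M"
    unfolding paving_def
  proof (intro conjI ballI)
    show "is_matroid ?M" by (rule ism)
    fix C assume "C \<in> circuits ?M"
    then have "C \<in> qp_type2 n H \<or> C \<in> qp_type3 d n H" by (rule circ0_t2)
    then have "card C = n \<or> card C = n + 1"
    proof
      assume "C \<in> qp_type2 n H" then show ?thesis using card_t2 by simp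
    next
      assume "C \<in> qp_type3 d n H" then show ?thesis using card_t3 by simp
    qed
    then show "card C = matroid_rank ?M \<or> card C = matroid_rank ?M + 1" unfolding rk0 .
  qed
  have hc_sub: "\<exists>Hi\<in>H. X \<subseteq> Hi" if hc: "hyp_cand ?M X" for X
  proof -
    have X: "X \<subseteq> E0" "n \<le> card X" "\<forall>Y. Y \<subseteq> X \<and> card Y = n \<longrightarrow> Y \<in> circuits ?M"
      using hc rk0 unfolding hyp_cand_def by auto
    have t2: "Y \<in> qp_type2 n H" if "Y \<subseteq> X" "card Y = n" for Y
    proof -
      have "Y \<in> circuits ?M" using X(3) that by blast
      then have "Y \<in> qp_type2 n H \<or> Y \<in> qp_type3 d n H" using circ0_t2 by blast
      moreover have "Y \<notin> qp_type3 d n H"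
      proof
        assume "Y \<in> qp_type3 d n H" then have "card Y = n + 1" by (rule card_t3)
        then show False using that(2) by simp
      qed
      ultimately show ?thesis by blast
    qed
    obtain Y0 where Y0: "Y0 \<subseteq> X" "card Y0 = n" using X(2) by (meson obtain_subset_with_card_n)
    have Y0t: "Y0 \<in> qp_type2 n H" using t2 Y0 by blast
    obtain Hi where Hi: "Hi \<in> H" "Y0 \<subseteq> Hi" using Y0t t2_iff by blast
    have noY0: "\<forall>Z\<in>qp_type1 n H. \<not> Z \<subseteq> Y0" using Y0t t2_iff by blast
    have finY0: "finite Y0" using finite_subset[OF Y0(1) finite_subset[OF X(1) finE0]] .
    have "Y0 \<noteq> {}" using Y0(2) npos by auto
    then obtain y where y: "y \<in> Y0" by blast
    have "x \<in> Hi" if x: "x \<in> X" for x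
    proof (cases "x \<in> Y0")
      case True then show ?thesis using Hi by blast
    next
      case False
      define Y1 where "Y1 = insert x (Y0 - {y})"
      have cY1: "card Y1 = n" using Y1_def False finY0 y Y0(2) npos by simp
      have "Y1 \<subseteq> X" using Y1_def x Y0(1) by blast
      then have Y1t: "Y1 \<in> qp_type2 n H" using t2 cY1 by blast
      obtain Hj where Hj: "Hj \<in> H" "Y1 \<subseteq> Hj" using Y1t t2_iff by blast
      show ?thesis
      proof (cases "Hj = Hi")
        case True then show ?thesis using Hj Y1_def by blast
      next
        case False
        have "Y0 - {y} \<subseteq> Hi \<inter> Hj" using Hi Hj Y1_def by blast
        moreover have "card (Y0 - {y}) = n - 1" using Y0(2) y finY0 by simp
        ultimately have "Y0 - {y} \<in> qp_type1 n H" using t1_mk[OF Hi(1) Hj(1)] False by auto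
        then show ?thesis using noY0 by blast
      qed
    qed
    then show ?thesis using Hi(1) by blast
  qed
  have dh_eq: "X = Hi \<inter> E0" if dh: "dependent_hyperplane ?M X" and Hi: "Hi \<in> H" "X \<subseteq> Hi" for X Hi
  proof -
    have hc: "hyp_cand ?M X" using dh unfolding dependent_hyperplane_def by blast
    have X: "X \<subseteq> E0" "n \<le> card X" using hc rk0 unfolding hyp_cand_def by auto
    have XH: "X \<subseteq> Hi \<inter> E0" using X Hi by blast
    have "hyp_cand ?M (Hi \<inter> E0)"
      unfolding hyp_cand_def rk0
    proof (intro conjI allI impI)
      show "Hi \<inter> E0 \<subseteq> ground ?M" by simp
      have "card X \<le> card (Hi \<inter> E0)" using card_mono[OF _ XH] finE0 by simp
      then show "n \<le> card (Hi \<inter> E0)" using X(2) by simp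
      fix Y assume Y: "Y \<subseteq> Hi \<inter> E0 \<and> card Y = n"
      have "\<forall>Z\<in>qp_type1 n H. \<not> Z \<subseteq> Y" using noT1 Y by blast
      then have "Y \<in> qp_type2 n H" unfolding t2_iff using Y Hi(1) by blast
      then have "Y \<in> circuits M" by (rule circ_t2)
      then show "Y \<in> circuits ?M" using circ0 Y by blast
    qed
    then show ?thesis using dh XH unfolding dependent_hyperplane_def by blast
  qed
  have tm: "tame ?M"
    unfolding tame_def
  proof (intro allI impI)
    fix X Y Z
    assume a: "dependent_hyperplane ?M X \<and> dependent_hyperplane ?M Y \<and> dependent_hyperplane ?M Z \<and>
      X \<noteq> Y \<and> X \<noteq> Z \<and> Y \<noteq> Z"
    have "hyp_cand ?M X" using a unfolding dependent_hyperplane_def by blast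
    then obtain Hx where Hx: "Hx \<in> H" "X \<subseteq> Hx" using hc_sub by blast
    have "hyp_cand ?M Y" using a unfolding dependent_hyperplane_def by blast
    then obtain Hy where Hy: "Hy \<in> H" "Y \<subseteq> Hy" using hc_sub by blast
    have "hyp_cand ?M Z" using a unfolding dependent_hyperplane_def by blast
    then obtain Hz where Hz: "Hz \<in> H" "Z \<subseteq> Hz" using hc_sub by blast
    have ex: "X = Hx \<inter> E0" using dh_eq a Hx by blast
    have ey: "Y = Hy \<inter> E0" using dh_eq a Hy by blast
    have ez: "Z = Hz \<inter> E0" using dh_eq a Hz by blast
    have "Hx \<noteq> Hy" "Hx \<noteq> Hz" "Hy \<noteq> Hz" using a ex ey ez by auto
    then have "Hx \<inter> Hy \<inter> Hz = {}" using triple[OF Hx(1) Hy(1) Hz(1)] by blast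
    then show "X \<inter> Y \<inter> Z = {}" using Hx(2) Hy(2) Hz(2) by blast
  qed
  show ?thesis using pav tm by simp
qed

end


theorem proposition3p7:
  fixes n :: nat and M :: matroid
  assumes "n_quasi_paving n M"
    and "matroid_rank M = n"
  shows "\<exists>(Ms :: nat \<Rightarrow> matroid) r. paving (Ms 0) \<and> tame (Ms 0) \<and> Ms r = M \<and>
           (\<forall>i\<in>{1..r}. \<exists>F a. flat (Ms (i - 1)) F \<and>
               int (rk (Ms (i - 1)) F) = int n - 2 \<and>
               a \<notin> ground (Ms (i - 1)) \<and>
               Ms i = principal_ext (Ms (i - 1)) F a)"
proof -
  obtain d H where mat: "is_matroid M" and rep: "quasi_paving_rep d n H"
    and gr: "ground M = {1..d}" and circ: "circuits M = qp_circuits d n H"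
    using assms(1) unfolding n_quasi_paving_def by blast
  interpret qp M d n H using mat rep gr circ assms(2) by unfold_locales
  obtain B0 where B0: "B0 \<in> bases M" using bases_ne by blast
  have B0E: "B0 \<subseteq> E" using bases_char B0 by blast
  define P where "P X \<longleftrightarrow> B0 \<subseteq> X \<and> X \<subseteq> E \<and> (\<forall>T\<in>qp_type1 n H. \<not> T \<subseteq> X)" for X
  have PB0: "P B0"
    unfolding P_def
  proof (intro conjI ballI)
    show "B0 \<subseteq> B0" by simp
    show "B0 \<subseteq> E" by (rule B0E)
    fix T assume "T \<in> qp_type1 n H"
    then show "\<not> T \<subseteq> B0" using indep_no_circuit[OF basis_indep[OF B0] circ_t1] by simp
  qed
  have bnd: "\<forall>y. P y \<longrightarrow> card y < card E + 1"
  proof (intro allI impI)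
    fix y assume "P y" then have "y \<subseteq> E" unfolding P_def by blast
    then have "card y \<le> card E" by (rule card_mono[OF finE])
    then show "card y < card E + 1" by simp
  qed
  obtain E0 where PE0: "P E0" and maxE0: "\<forall>Y. P Y \<longrightarrow> card Y \<le> card E0"
    using Lattices_Big.ex_has_greatest_nat[of P B0 card, OF PB0 bnd] by blast
  have B0E0: "B0 \<subseteq> E0" and E0E: "E0 \<subseteq> E" and noT1: "\<forall>T\<in>qp_type1 n H. \<not> T \<subseteq> E0"
    using PE0 unfolding P_def by auto
  have finE0: "finite E0" using E0E finite_subset by blast
  have ext: "\<exists>T\<in>qp_type1 n H. a \<in> T \<and> T - {a} \<subseteq> E0" if a: "a \<in> E" "a \<notin> E0" for a
  proof -
    have "card (insert a E0) = Suc (card E0)" using a finE0 by simp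
    then have "\<not> P (insert a E0)"
    proof -
      assume c: "card (insert a E0) = Suc (card E0)"
      show "\<not> P (insert a E0)"
      proof
        assume "P (insert a E0)"
        then have "card (insert a E0) \<le> card E0" using maxE0 by simp
        then show False using c by simp
      qed
    qed
    moreover have "B0 \<subseteq> insert a E0" "insert a E0 \<subseteq> E" using B0E0 E0E a by auto
    ultimately have "\<not> (\<forall>T\<in>qp_type1 n H. \<not> T \<subseteq> insert a E0)" unfolding P_def by simp
    then obtain T where T: "T \<in> qp_type1 n H" "T \<subseteq> insert a E0" by blast
    have "a \<in> T" using T noT1 by blast
    then show ?thesis using T by blast
  qed
  obtain ds where ds: "set ds = E - E0" "distinct ds" using finite_distinct_list[of "E - E0"] by auto
  define Ms where "Ms i = restr M (E - set (drop i ds))" for i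
  have M0eq: "Ms 0 = restr M E0" unfolding Ms_def using ds E0E by (simp add: Diff_Diff_Int Int_absorb1)
  have Mr: "Ms (length ds) = M"
  proof -
    have "Ms (length ds) = (E, {X. X \<subseteq> E \<and> X \<in> bases M})" unfolding Ms_def restr_def by simp
    also have "{X. X \<subseteq> E \<and> X \<in> bases M} = bases M" using bases_char by blast
    also have "(E, bases M) = M" using gr unfolding ground_def bases_def by (simp add: prod_eq_iff)
    finally show ?thesis .
  qed
  have steps: "\<exists>F a. flat (Ms (i - 1)) F \<and> int (rk (Ms (i - 1)) F) = int n - 2 \<and>
               a \<notin> ground (Ms (i - 1)) \<and> Ms i = principal_ext (Ms (i - 1)) F a"
    if i: "i \<in> {1..length ds}" for i
  proof -
    define j where "j = i - 1"
    have j: "j < length ds" "Suc j = i" using i j_def by auto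
    define a where "a = ds ! j"
    have dr: "drop j ds = a # drop i ds" using Cons_nth_drop_Suc[OF j(1)] j(2) a_def by simp
    have "distinct (drop j ds)" using ds(2) by simp
    then have anot: "a \<notin> set (drop i ds)" using dr by simp
    have aset: "a \<in> set ds" using a_def j(1) by simp
    then have aE: "a \<in> E" and aE0: "a \<notin> E0" using ds(1) by auto
    define E' where "E' = E - set (drop j ds)"
    have E'eq: "E' = E - insert a (set (drop i ds))" using E'_def dr by simp
    have Ei: "E - set (drop i ds) = insert a E'" using E'eq anot aE by blast
    have sub: "set (drop k ds) \<subseteq> E - E0" for k using set_drop_subset[of k ds] ds(1) by simp
    have E0E': "E0 \<subseteq> E'" using E'_def sub[of j] E0E by blast
    have E'E: "E' \<subseteq> E" using E'_def by blast
    have aE': "a \<notin> E'" using E'eq by blast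
    obtain T where T: "T \<in> qp_type1 n H" "a \<in> T" "T - {a} \<subseteq> E0" using ext[OF aE aE0] by blast
    have TE': "T - {a} \<subseteq> E'" using T(3) E0E' by blast
    have B0E': "B0 \<subseteq> E'" using B0E0 E0E' by blast
    have "T \<noteq> {}" using T(2) by blast
    moreover have "finite T" using T(1) circ_t1 circ_fin by blast
    ultimately have "card T \<ge> 1" by (simp add: Suc_le_eq card_gt_0_iff)
    then have n2: "n \<ge> 2" using card_t1[OF T(1)] by simp
    have "\<exists>F. flat (restr M E') F \<and> int (rk (restr M E') F) = int n - 2 \<and>
           restr M (insert a E') = principal_ext (restr M E') F a"
    proof (cases "n = 2")
      case True
      then show ?thesis using step2[OF B0 B0E' E'E aE aE' T(1,2)] by blast
    next
      case False
      then have "3 \<le> n" using n2 by simp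
      then show ?thesis using step3[OF B0 B0E' E'E aE aE' T(1,2) TE'] by blast
    qed
    moreover have "Ms (i - 1) = restr M E'" unfolding Ms_def E'_def j_def ..
    moreover have "Ms i = restr M (insert a E')" unfolding Ms_def using Ei by simp
    ultimately show ?thesis using aE' by auto
  qed
  have pt: "paving (Ms 0) \<and> tame (Ms 0)" using m0[OF B0 B0E0 E0E noT1] M0eq by simp
  show ?thesis
    apply (rule exI[of _ Ms])
    apply (rule exI[of _ "length ds"])
    using pt Mr steps by simp
qed


end
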